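(* Let $n$ be a positive integer and let $\pi\subseteq\mathbb{Z}^2$ be a hexagonal permutation with $n$ dots. Then there exist an integer $i$ with $0\le i\le n-1$ and a translation vector $(a,b)\in\mathbb{Z}^2$ such that every dot of $\pi$ lies in $(a,b)+S_i(n)$, where $$S_i(n)=\{(x,y)\in\mathbb{Z}^2:\ 0\le x\le n-1,\ 0\le y\le n-1,\ -i\le x-y\le n-1-i\}.$$
   Context: Cells of the hexagonal grid are represented by cells $(x,y)\in\mathbb{Z}^2$ of the square grid (cell $(x,y)$ adjacent to $(x\pm1,y)$, $(x,y\pm1)$, $(x+1,y+1)$, $(x-1,y-1)$). The three families of "rows" are the rows $\{y=c\}$, the columns $\{x=c\}$ and the standard diagonals $\{x-y=c\}$, $c\in\mathbb{Z}$; lines of the same family are consecutive if their constants differ by $1$. A hexagonal permutation with $n$ dots is a set $\pi$ of $n$ cells such that, for each of the three families, the lines of that family containing a dot of $\pi$ are exactly $n$ consecutive lines, each containing exactly one dot of $\pi$. (Equivalently, $S_i(n)$, $0\le i\le n-1$, are the intersections of an $n\times n$ square with $n$ consecutive standard diagonals each meeting the square.) *)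

theory Defs
  imports Main
begin

text \<open>A family of lines is given by a function assigning to each cell the constant
of the line of that family containing it: rows y = c, columns x = c,
standard diagonals x - y = c.\<close>

definition consecutive_one_each :: "((int \<times> int) \<Rightarrow> int) \<Rightarrow> (int \<times> int) set \<Rightarrow> nat \<Rightarrow> bool" where
  "consecutive_one_each f P n \<longleftrightarrow>
     (\<exists>c. f ` P = {c .. c + int n - 1}) \<and> (\<forall>c \<in> f ` P. card {p \<in> P. f p = c} = 1)"

definition hex_perm :: "(int \<times> int) set \<Rightarrow> nat \<Rightarrow> bool" where
  "hex_perm P n \<longleftrightarrow> finite P \<and> card P = n \<and>
     consecutive_one_each snd P n \<and>
     consecutive_one_each fst P n \<and>
     consecutive_one_each (\<lambda>(x, y). x - y) P n"

definition S_set :: "nat \<Rightarrow> nat \<Rightarrow> (int \<times> int) set" where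
  "S_set n i = {(x, y). 0 \<le> x \<and> x \<le> int n - 1 \<and> 0 \<le> y \<and> y \<le> int n - 1 \<and>
                       - int i \<le> x - y \<and> x - y \<le> int n - 1 - int i}"

end

theory Submission
  imports Defs
begin

lemma coe_inj:
  assumes "consecutive_one_each f P n" "finite P"
  shows "inj_on f P"
proof (rule inj_onI)
  fix p q assume pq: "p \<in> P" "q \<in> P" "f p = f q"
  have "card {r \<in> P. f r = f q} = 1" using assms(1) pq unfolding consecutive_one_each_def by auto
  then obtain z where "{r \<in> P. f r = f q} = {z}" by (auto simp: card_Suc_eq)
  then have "p \<in> {z}" "q \<in> {z}" using pq by blast+
  then show "p = q" by simp
qed

lemma sum_int_interval:
  "(\<Sum>k\<in>{c..c + int n - 1}. k) = int n * c + (\<Sum>j\<in>{0..<n}. int j)"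
proof (induction n)
  case 0 then show ?case by simp
next
  case (Suc n)
  have e: "{c..c + int (Suc n) - 1} = insert (c + int n) {c..c + int n - 1}" by auto
  show ?case unfolding e using Suc by (simp add: algebra_simps)
qed

lemma coe_sum:
  assumes "consecutive_one_each f P n" "finite P"
  shows "\<exists>c. sum f P = int n * c + (\<Sum>j\<in>{0..<n}. int j) \<and> f ` P = {c..c + int n - 1}"
proof -
  obtain c where c: "f ` P = {c..c + int n - 1}" using assms(1) unfolding consecutive_one_each_def by auto
  have "sum f P = sum (\<lambda>k. k) (f ` P)"
    using sum.reindex[OF coe_inj[OF assms], of "\<lambda>k. k"] by simp
  then show ?thesis using c sum_int_interval by auto
qed

lemma S_bound: "(\<Sum>j\<in>{0..<n}. int j) \<le> int n * (int n - 1)"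
proof -
  have "(\<Sum>j\<in>{0..<n}. int j) \<le> (\<Sum>j\<in>{0..<n}. int n - 1)"
    by (rule sum_mono) auto
  then show ?thesis by simp
qed

theorem lemma3:
  fixes P :: "(int \<times> int) set" and n :: nat
  assumes "n \<ge> 1" and "hex_perm P n"
  shows "\<exists>i < n. \<exists>a b :: int. \<forall>(x, y) \<in> P. (x - a, y - b) \<in> S_set n i"
proof -
  have fin: "finite P" using assms(2) unfolding hex_perm_def by auto
  define S where "S = (\<Sum>j\<in>{0..<n}. int j)"
  obtain a where a: "sum fst P = int n * a + S" "fst ` P = {a..a + int n - 1}"
    using coe_sum[OF _ fin, of fst n] assms(2) unfolding hex_perm_def S_def by auto
  obtain b where b: "sum snd P = int n * b + S" "snd ` P = {b..b + int n - 1}"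
    using coe_sum[OF _ fin, of snd n] assms(2) unfolding hex_perm_def S_def by auto
  obtain d where d: "sum (\<lambda>(x, y). x - y) P = int n * d + S" "(\<lambda>(x, y). x - y) ` P = {d..d + int n - 1}"
    using coe_sum[OF _ fin, of "\<lambda>(x, y). x - y" n] assms(2) unfolding hex_perm_def S_def by auto
  have "sum (\<lambda>(x, y). x - y) P = sum fst P - sum snd P"
    by (simp add: case_prod_unfold sum_subtractf)
  then have eq: "int n * (a - b - d) = S" using a b d by (simp add: algebra_simps)
  have S0: "S \<ge> 0" unfolding S_def by (simp add: sum_nonneg)
  have S1: "S \<le> int n * (int n - 1)" unfolding S_def by (rule S_bound)
  have np: "int n > 0" using assms(1) by simp
  have i0: "a - b - d \<ge> 0"
  proof (rule ccontr)
    assume "\<not> a - b - d \<ge> 0"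
    then have "int n * (a - b - d) < 0" using np by (simp add: mult_pos_neg)
    then show False using eq S0 by simp
  qed
  have i1: "a - b - d \<le> int n - 1"
  proof -
    have "int n * (a - b - d) \<le> int n * (int n - 1)" using eq S1 by simp
    then show ?thesis using np by simp
  qed
  define i where "i = nat (a - b - d)"
  have ii: "int i = a - b - d" using i0 unfolding i_def by simp
  have "i < n" using i1 ii by linarith
  moreover have "\<forall>(x, y) \<in> P. (x - a, y - b) \<in> S_set n i"
  proof (clarify)
    fix x y assume p: "(x, y) \<in> P"
    have "x \<in> {a..a + int n - 1}" using a(2) p by (metis fst_conv image_eqI)
    moreover have "y \<in> {b..b + int n - 1}" using b(2) p by (metis snd_conv image_eqI)
    moreover have "x - y \<in> {d..d + int n - 1}" using d(2) p by (metis (mono_tags) case_prod_conv image_eqI)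
    ultimately show "(x - a, y - b) \<in> S_set n i" unfolding S_set_def using ii by auto
  qed
  ultimately show ?thesis by blast
qed

end
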